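(* Let $n\ge1$, $\tau\in\mathfrak{S}_n$ and $1\le a<b\le n$. Then $\lambda(\tau)=\lambda\big(\overline{\tau}^{[a,b]}\big)$.
   Context: Permutations in one-line notation; $\mathrm{st}(a_1,\dots,a_p)$ is the permutation with the same relative order as distinct integers $a_i$. Trees: $\mathcal{Y}_n$ = rooted planar binary trees with $n$ internal nodes, $\mathcal{Y}_0=\{|\}$; $s\vee t$ = tree whose root has left subtree $s$ and right subtree $t$; $t=t_l\vee t_r$ uniquely. For $\sigma\in\mathfrak{S}_p,\tau\in\mathfrak{S}_q$, $\sigma\vee\tau=(\sigma(1)+q,\dots,\sigma(p)+q,p+q+1,\tau(1),\dots,\tau(q))$. $\lambda:\mathfrak{S}_n\to\mathcal{Y}_n$: $\lambda(\mathrm{id}_0)=|$, and for $j=\sigma^{-1}(n)$, $\lambda(\sigma)=\lambda(\mathrm{st}(\sigma(1),..,\sigma(j-1)))\vee\lambda(\mathrm{st}(\sigma(j+1),..,\sigma(n)))$. $\gamma:\mathcal{Y}_n\to\mathfrak{S}_n$: $\gamma(|)=\mathrm{id}_0$, $\gamma(t)=\gamma(t_l)\vee\gamma(t_r)$. For any permutation $\sigma$, $\overline{\sigma}:=\gamma(\lambda(\sigma))$. Given $\tau\in\mathfrak{S}_n$ and $1\le a<b\le n$, let $\mathsf{S}=\{s_1<\dots<s_m\}=\tau^{-1}([a,b])$, let $\sigma=\mathrm{st}(\tau(s_1),\dots,\tau(s_m))$, and define $\overline{\tau}^{[a,b]}\in\mathfrak{S}_n$ by $\overline{\tau}^{[a,b]}(i)=\tau(i)$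 if $i\notin\mathsf{S}$ and $\overline{\tau}^{[a,b]}(s_j)=a-1+\overline{\sigma}(j)$. *)

theory Defs
  imports Main
begin

text \<open>Permutations are lists in one-line notation (values 1..n).
  Rooted planar binary trees: Leaf is the tree with no internal node,
  Node s t is s \<or> t.\<close>

datatype tree = Leaf | Node tree tree

definition perms :: "nat \<Rightarrow> nat list set" where
  "perms n = {xs. distinct xs \<and> set xs = {1..n}}"

definition st :: "nat list \<Rightarrow> nat list" where
  "st xs = map (\<lambda>x. card {y \<in> set xs. y \<le> x}) xs"

lemma length_st[simp]: "length (st xs) = length xs"
  by (simp add: st_def)

text \<open>The map lambda from permutations to trees; j is the (0-based) position of n
  (the guard j < length xs always holds for genuine permutations).\<close>
function lam :: "nat list \<Rightarrow> tree" where
  "lam xs = (if xs = [] then Leaf else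
     (let j = (LEAST i. xs ! i = length xs) in
      if j < length xs then Node (lam (st (take j xs))) (lam (st (drop (Suc j) xs)))
      else Leaf))"
  by pat_completeness auto
termination
  by (relation "measure length") (auto simp: Let_def)

definition vee :: "nat list \<Rightarrow> nat list \<Rightarrow> nat list" where
  "vee s t = map (\<lambda>x. x + length t) s @ [length s + length t + 1] @ t"

fun gam :: "tree \<Rightarrow> nat list" where
  "gam Leaf = []"
| "gam (Node l r) = vee (gam l) (gam r)"

definition pbar :: "nat list \<Rightarrow> nat list" where
  "pbar s = gam (lam s)"

text \<open>tau-bar^[a,b]; positions are 0-based here, index j of s_j is the number of
  earlier positions in S.\<close>
definition bar_int :: "nat list \<Rightarrow> nat \<Rightarrow> nat \<Rightarrow> nat list" where
  "bar_int \<tau> a b =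
     (let \<sigma> = st (filter (\<lambda>x. a \<le> x \<and> x \<le> b) \<tau>);
          ob = pbar \<sigma>
      in map (\<lambda>i. if a \<le> \<tau> ! i \<and> \<tau> ! i \<le> b
                  then a - 1 + ob ! card {k. k < i \<and> a \<le> \<tau> ! k \<and> \<tau> ! k \<le> b}
                  else \<tau> ! i) [0..<length \<tau>])"

end

theory Submission
  imports Defs
begin


definition stf :: "nat list \<Rightarrow> nat \<Rightarrow> nat" where
  "stf xs x = card {y \<in> set xs. y \<le> x}"

lemma st_eq: "st xs = map (stf xs) xs" by (simp add: st_def stf_def)

lemma stf_less_iff:
  assumes "x \<in> set xs" "x' \<in> set xs"
  shows "stf xs x < stf xs x' \<longleftrightarrow> x < x'"
proof
  assume "x < x'"
  have "{y \<in> set xs. y \<le> x} \<subseteq> {y \<in> set xs. y \<le> x'}"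
    using \<open>x < x'\<close> by auto
  moreover have "x' \<in> {y \<in> set xs. y \<le> x'}" "x' \<notin> {y \<in> set xs. y \<le> x}"
    using \<open>x < x'\<close> assms by auto
  ultimately have "{y \<in> set xs. y \<le> x} \<subset> {y \<in> set xs. y \<le> x'}" by blast
  then show "stf xs x < stf xs x'" unfolding stf_def by (simp add: psubset_card_mono)
next
  assume h: "stf xs x < stf xs x'"
  show "x < x'"
  proof (rule ccontr)
    assume "\<not> x < x'"
    then have "{y \<in> set xs. y \<le> x'} \<subseteq> {y \<in> set xs. y \<le> x}" by auto
    then have "stf xs x' \<le> stf xs x" unfolding stf_def by (simp add: card_mono)
    with h show False by simp
  qed
qed

lemma st_nth: "i < length xs \<Longrightarrow> st xs ! i = stf xs (xs ! i)"
  by (simp add: st_eq)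

lemma st_nth_less:
  assumes "i < length xs" "j < length xs"
  shows "st xs ! i < st xs ! j \<longleftrightarrow> xs ! i < xs ! j"
  using assms by (simp add: st_nth stf_less_iff)

lemma perms_length: "xs \<in> perms n \<Longrightarrow> length xs = n"
  unfolding perms_def using distinct_card by fastforce

lemma st_perms:
  assumes "distinct xs"
  shows "st xs \<in> perms (length xs)"
proof -
  have inj: "inj_on (stf xs) (set xs)"
  proof (rule inj_onI)
    fix x y assume "x \<in> set xs" "y \<in> set xs" "stf xs x = stf xs y"
    then show "x = y" using stf_less_iff[of x xs y] stf_less_iff[of y xs x] by (metis linorder_neq_iff)
  qed
  have d: "distinct (st xs)" using assms inj by (simp add: st_eq distinct_map)
  have sub: "set (st xs) \<subseteq> {1..length xs}"
  proof
    fix v assume "v \<in> set (st xs)"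
    then obtain x where x: "x \<in> set xs" "v = stf xs x" by (auto simp: st_eq)
    have "x \<in> {y \<in> set xs. y \<le> x}" using x by auto
    then have "{y \<in> set xs. y \<le> x} \<noteq> {}" by blast
    then have "1 \<le> v" using x unfolding stf_def
      by (simp add: Suc_leI card_gt_0_iff)
    moreover have "v \<le> card (set xs)" unfolding x stf_def by (rule card_mono) auto
    ultimately show "v \<in> {1..length xs}" using assms distinct_card by fastforce
  qed
  have "card (set (st xs)) = length xs" using d distinct_card by fastforce
  then have "set (st xs) = {1..length xs}" using sub by (simp add: card_subset_eq)
  then show ?thesis using d by (simp add: perms_def)
qed

lemma st_id:
  assumes "xs \<in> perms n" shows "st xs = xs"
proof -
  have "stf xs x = x" if "x \<in> set xs" for x
  proof -
    have "{y \<in> set xs. y \<le> x} = {1..x}" using assms that by (auto simp: perms_def)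
    then show ?thesis by (simp add: stf_def)
  qed
  then show ?thesis by (simp add: st_eq map_idI)
qed

lemma st_shift: "st (map (\<lambda>x. x + q) xs) = st xs"
proof -
  have "stf (map (\<lambda>x. x + q) xs) (x + q) = stf xs x" for x
  proof -
    have "{y \<in> set (map (\<lambda>x. x + q) xs). y \<le> x + q} = (\<lambda>x. x + q) ` {y \<in> set xs. y \<le> x}"
      by auto
    then show ?thesis unfolding stf_def by (simp add: card_image)
  qed
  then show ?thesis by (simp add: st_eq)
qed


definition ismx :: "nat list \<Rightarrow> nat \<Rightarrow> nat \<Rightarrow> nat \<Rightarrow> bool" where
  "ismx xs i k p \<longleftrightarrow> i \<le> p \<and> p \<le> k \<and> k < length xs \<and>
     (\<forall>q. i \<le> q \<longrightarrow> q \<le> k \<longrightarrow> q \<noteq> p \<longrightarrow> xs ! q < xs ! p)"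

definition Eqv :: "nat list \<Rightarrow> nat list \<Rightarrow> bool" where
  "Eqv xs ys \<longleftrightarrow> length xs = length ys \<and> (\<forall>i k p. ismx xs i k p = ismx ys i k p)"

lemma ismx_st: "ismx (st xs) i k p = ismx xs i k p"
  unfolding ismx_def by (auto simp: st_nth_less)

lemma Eqv_st: "Eqv (st xs) (st ys) = Eqv xs ys"
  unfolding Eqv_def by (simp add: ismx_st)

lemma ismx_take: "ismx (take j xs) i k p \<longleftrightarrow> k < j \<and> ismx xs i k p"
  unfolding ismx_def by auto

lemma ismx_drop: "ismx (drop s xs) i k p \<longleftrightarrow> ismx xs (i + s) (k + s) (p + s)"
proof
  assume h: "ismx (drop s xs) i k p"
  show "ismx xs (i + s) (k + s) (p + s)"
    unfolding ismx_def
  proof (intro conjI allI impI)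
    fix q assume q: "i + s \<le> q" "q \<le> k + s" "q \<noteq> p + s"
    then have "xs ! (s + (q - s)) < xs ! (s + p)" using h unfolding ismx_def
      by (auto) (smt (verit) add.commute le_add_diff_inverse2 le_diff_conv le_diff_conv2 le_trans nat_le_iff_add)
    then show "xs ! q < xs ! (p + s)" using q by (simp add: add.commute)
  qed (use h in \<open>auto simp: ismx_def\<close>)
next
  assume h: "ismx xs (i + s) (k + s) (p + s)"
  show "ismx (drop s xs) i k p"
    unfolding ismx_def
  proof (intro conjI allI impI)
    fix q assume q: "i \<le> q" "q \<le> k" "q \<noteq> p"
    then have "xs ! (q + s) < xs ! (p + s)" using h unfolding ismx_def by auto
    moreover have "k + s < length xs" using h by (simp add: ismx_def)
    ultimately show "drop s xs ! q < drop s xs ! p" using q h by (simp add: add.commute ismx_def)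
  qed (use h in \<open>auto simp: ismx_def\<close>)
qed

lemma Eqv_take: "Eqv xs ys \<Longrightarrow> Eqv (take j xs) (take j ys)"
  unfolding Eqv_def by (simp add: ismx_take)

lemma Eqv_drop: "Eqv xs ys \<Longrightarrow> Eqv (drop j xs) (drop j ys)"
  unfolding Eqv_def by (simp add: ismx_drop)

lemma perms_pos:
  assumes "xs \<in> perms n" "0 < n"
  obtains j where "j < n" "xs ! j = n"
proof -
  have "n \<in> set xs" using assms by (auto simp: perms_def)
  then show ?thesis using that perms_length[OF assms(1)] by (auto simp: in_set_conv_nth)
qed

lemma perms_less:
  assumes "xs \<in> perms n" "j < n" "xs ! j = n" "q < n" "q \<noteq> j"
  shows "xs ! q < n"
proof -
  have d: "distinct xs" and s: "set xs = {1..n}" and l: "length xs = n"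
    using assms(1) perms_length by (auto simp: perms_def)
  have "xs ! q \<in> {1..n}" using s l assms(4) nth_mem by blast
  moreover have "xs ! q \<noteq> xs ! j" using nth_eq_iff_index_eq[OF d, of q j] l assms(2,4,5) by simp
  ultimately show ?thesis using assms(3) by auto
qed

lemma lam_perm:
  assumes "xs \<in> perms n" "j < n" "xs ! j = n"
  shows "lam xs = Node (lam (st (take j xs))) (lam (st (drop (Suc j) xs)))"
proof -
  have l: "length xs = n" using assms perms_length by auto
  have d: "distinct xs" using assms by (simp add: perms_def)
  have "(LEAST i. xs ! i = length xs) = j"
  proof (rule Least_equality)
    show "xs ! j = length xs" using l assms by simp
  next
    fix y assume "xs ! y = length xs"
    show "j \<le> y"
    proof (cases "y < n")
      case True
      then show ?thesis using perms_less[OF assms(1-3) True] \<open>xs ! y = length xs\<close> l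
        by (cases "y = j") auto
    next
      case False then show ?thesis using assms by simp
    qed
  qed
  moreover have "xs \<noteq> []" using l assms by auto
  ultimately show ?thesis using l assms by (subst lam.simps) (simp add: Let_def)
qed

lemma perms_take: "xs \<in> perms n \<Longrightarrow> st (take j xs) \<in> perms (min j n)"
  using st_perms[of "take j xs"] perms_length[of xs n] by (simp add: perms_def min.commute)

lemma perms_drop: "xs \<in> perms n \<Longrightarrow> st (drop j xs) \<in> perms (n - j)"
  using st_perms[of "drop j xs"] perms_length[of xs n] by (simp add: perms_def)

lemma lam_size: "xs \<in> perms n \<Longrightarrow> size (lam xs) = n"
proof (induction n arbitrary: xs rule: less_induct)
  case (less n)
  show ?case
  proof (cases "n = 0")
    case True
    then have "xs = []" using less.prems perms_length by auto
    then show ?thesis using True by simp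
  next
    case False
    then obtain j where j: "j < n" "xs ! j = n" using perms_pos less.prems by blast
    have "size (lam (st (take j xs))) = j"
      using less.IH[of j] perms_take[OF less.prems, of j] j by simp
    moreover have "size (lam (st (drop (Suc j) xs))) = n - Suc j"
      using less.IH[of "n - Suc j"] perms_drop[OF less.prems, of "Suc j"] j by simp
    ultimately show ?thesis using lam_perm[OF less.prems j] j by simp
  qed
qed


lemma gam_perm: "gam t \<in> perms (size t) \<and> lam (gam t) = t"
proof (induction t)
  case Leaf
  then show ?case by (simp add: perms_def)
next
  case (Node l r)
  define L where "L = gam l"
  define R where "R = gam r"
  define p where "p = size l"
  define q where "q = size r"
  have L: "L \<in> perms p" "lam L = l" using Node.IH(1) by (auto simp: L_def p_def)
  have R: "R \<in> perms q" "lam R = r" using Node.IH(2) by (auto simp: R_def q_def)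
  have lL: "length L = p" and lR: "length R = q" using L R perms_length by auto
  have g: "gam (Node l r) = map (\<lambda>x. x + q) L @ [p + q + 1] @ R"
  proof -
    have "gam (Node l r) = vee L R" by (simp add: L_def R_def)
    then show ?thesis by (simp add: vee_def lL lR)
  qed
  have sL: "set (map (\<lambda>x. x + q) L) = {q+1..q+p}"
  proof -
    have "set (map (\<lambda>x. x + q) L) = (\<lambda>x. x + q) ` {1..p}" using L by (simp add: perms_def)
    also have "\<dots> = {q+1..q+p}"
    by (auto simp: image_iff)
    finally show ?thesis .
  qed
  have sR: "set R = {1..q}" using R by (simp add: perms_def)
  have dL: "distinct (map (\<lambda>x. x + q) L)" using L by (simp add: perms_def distinct_map)
  have dR: "distinct R" using R by (simp add: perms_def)
  have P: "gam (Node l r) \<in> perms (size (Node l r))"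
    unfolding perms_def g using sL sR dL dR by (auto simp: p_def q_def)
  have n: "size (Node l r) = p + q + 1" by (simp add: p_def q_def)
  have "gam (Node l r) ! p = p + q + 1" unfolding g by (simp add: nth_append lL)
  then have "lam (gam (Node l r)) = Node (lam (st (take p (gam (Node l r))))) (lam (st (drop (Suc p) (gam (Node l r)))))"
    using lam_perm[of "gam (Node l r)" "p + q + 1" p] P n by simp
  also have "take p (gam (Node l r)) = map (\<lambda>x. x + q) L" unfolding g by (simp add: lL)
  also have "drop (Suc p) (gam (Node l r)) = R" unfolding g by (simp add: lL)
  finally have "lam (gam (Node l r)) = Node l r"
    using st_shift st_id L R by simp
  with P show ?case by simp
qed


declare lam.simps[simp del]

lemma ismx_top:
  assumes "xs \<in> perms n" "j < n" "xs ! j = n" "i \<le> j" "j \<le> k" "k < n"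
  shows "ismx xs i k p \<longleftrightarrow> p = j"
proof
  assume h: "ismx xs i k p"
  show "p = j"
  proof (rule ccontr)
    assume "p \<noteq> j"
    then have "xs ! j < xs ! p" using h assms unfolding ismx_def by auto
    moreover have "p < n" using h assms unfolding ismx_def by auto
    ultimately show False using perms_less[OF assms(1-3), of p] \<open>p \<noteq> j\<close> assms(3) by auto
  qed
next
  assume "p = j"
  then show "ismx xs i k p" using assms perms_less[OF assms(1-3)] perms_length[OF assms(1)]
    unfolding ismx_def by auto
qed

lemma Eqv_lam:
  "xs \<in> perms n \<Longrightarrow> ys \<in> perms n \<Longrightarrow> Eqv xs ys \<Longrightarrow> lam xs = lam ys"
proof (induction n arbitrary: xs ys rule: less_induct)
  case (less n)
  show ?case
  proof (cases "n = 0")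
    case True
    then have "xs = []" "ys = []" using less.prems perms_length by auto
    then show ?thesis by simp
  next
    case False
    obtain j where j: "j < n" "xs ! j = n" using perms_pos less.prems(1) False by blast
    obtain j' where j': "j' < n" "ys ! j' = n" using perms_pos less.prems(2) False by blast
    have "ismx xs 0 (n - 1) j" using ismx_top[OF less.prems(1) j, of 0 "n - 1" j] j by simp
    then have "ismx ys 0 (n - 1) j" using less.prems(3) by (simp add: Eqv_def)
    then have jj: "j = j'" using ismx_top[OF less.prems(2) j', of 0 "n - 1" j] j' by simp
    have e1: "Eqv (st (take j xs)) (st (take j ys))" using less.prems(3) Eqv_take Eqv_st by blast
    have e2: "Eqv (st (drop (Suc j) xs)) (st (drop (Suc j) ys))" using less.prems(3) Eqv_drop Eqv_st by blast
    have "lam (st (take j xs)) = lam (st (take j ys))"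
      using less.IH[of j] perms_take[OF less.prems(1), of j] perms_take[OF less.prems(2), of j] e1 j by simp
    moreover have "lam (st (drop (Suc j) xs)) = lam (st (drop (Suc j) ys))"
      using less.IH[of "n - Suc j"] perms_drop[OF less.prems(1), of "Suc j"] perms_drop[OF less.prems(2), of "Suc j"] e2 j by simp
    ultimately show ?thesis using lam_perm[OF less.prems(1) j] lam_perm[OF less.prems(2) j'] jj by simp
  qed
qed

lemma lam_Eqv:
  "xs \<in> perms n \<Longrightarrow> ys \<in> perms n \<Longrightarrow> lam xs = lam ys \<Longrightarrow> Eqv xs ys"
proof (induction n arbitrary: xs ys rule: less_induct)
  case (less n)
  have lx: "length xs = n" and ly: "length ys = n" using less.prems perms_length by auto
  show ?case
  proof (cases "n = 0")
    case True
    then have "xs = []" "ys = []" using lx ly by auto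
    then show ?thesis by (simp add: Eqv_def)
  next
    case False
    obtain j where j: "j < n" "xs ! j = n" using perms_pos less.prems(1) False by blast
    obtain j' where j': "j' < n" "ys ! j' = n" using perms_pos less.prems(2) False by blast
    have eq: "Node (lam (st (take j xs))) (lam (st (drop (Suc j) xs))) =
              Node (lam (st (take j' ys))) (lam (st (drop (Suc j') ys)))"
      using lam_perm[OF less.prems(1) j] lam_perm[OF less.prems(2) j'] less.prems(3) by simp
    have "size (lam (st (take j xs))) = j" using lam_size perms_take[OF less.prems(1), of j] j by simp
    moreover have "size (lam (st (take j' ys))) = j'" using lam_size perms_take[OF less.prems(2), of j'] j' by simp
    ultimately have jj: "j = j'" using eq by simp
    have l1: "lam (st (take j xs)) = lam (st (take j ys))" and
         l2: "lam (st (drop (Suc j) xs)) = lam (st (drop (Suc j) ys))" using eq jj by simp_all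
    have p1: "st (take j xs) \<in> perms j" "st (take j ys) \<in> perms j"
      using perms_take[OF less.prems(1), of j] perms_take[OF less.prems(2), of j] j by simp_all
    have p2: "st (drop (Suc j) xs) \<in> perms (n - Suc j)" "st (drop (Suc j) ys) \<in> perms (n - Suc j)"
      using perms_drop[OF less.prems(1), of "Suc j"] perms_drop[OF less.prems(2), of "Suc j"] by simp_all
    have e1: "Eqv (take j xs) (take j ys)"
      using less.IH[OF j(1) p1 l1] Eqv_st by simp
    have e2: "Eqv (drop (Suc j) xs) (drop (Suc j) ys)"
      using less.IH[OF _ p2 l2] j Eqv_st by simp
    have "ismx xs i k p = ismx ys i k p" for i k p
    proof (cases "k < n")
      case False then show ?thesis using lx ly by (simp add: ismx_def)
    next
      case kn: True
      show ?thesis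
      proof (cases "i \<le> j \<and> j \<le> k")
        case True
        then show ?thesis using ismx_top[OF less.prems(1) j, of i k p] ismx_top[OF less.prems(2) j', of i k p] jj kn by simp
      next
        case nt: False
        show ?thesis
        proof (cases "k < j")
          case True
          then show ?thesis using e1 unfolding Eqv_def by (metis ismx_take)
        next
          case False
          then have ij: "j < i" using nt by auto
          show ?thesis
          proof (cases "i \<le> p \<and> p \<le> k")
            case True
            have "ismx (drop (Suc j) xs) (i - Suc j) (k - Suc j) (p - Suc j) =
                  ismx (drop (Suc j) ys) (i - Suc j) (k - Suc j) (p - Suc j)"
              using e2 by (simp add: Eqv_def)
            then show ?thesis using ij True by (simp add: ismx_drop)
          next
            case False then show ?thesis by (auto simp: ismx_def)
          qed
        qed
      qed
    qed
    then show ?thesis using lx ly by (simp add: Eqv_def)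
  qed
qed


lemma block_ismx:
  assumes len: "length xs = length ys"
  and inn: "\<And>i. i < length xs \<Longrightarrow> (a \<le> xs!i \<and> xs!i \<le> b) = (a \<le> ys!i \<and> ys!i \<le> b)"
  and out: "\<And>i. i < length xs \<Longrightarrow> \<not>(a \<le> xs!i \<and> xs!i \<le> b) \<Longrightarrow> xs!i = ys!i"
  and blk: "\<And>i k p. k < length xs \<Longrightarrow> i \<le> p \<Longrightarrow> p \<le> k \<Longrightarrow> a \<le> xs!p \<and> xs!p \<le> b \<Longrightarrow>
     (\<forall>q. i \<le> q \<longrightarrow> q \<le> k \<longrightarrow> q \<noteq> p \<longrightarrow> a \<le> xs!q \<and> xs!q \<le> b \<longrightarrow> xs!q < xs!p) =
     (\<forall>q. i \<le> q \<longrightarrow> q \<le> k \<longrightarrow> q \<noteq> p \<longrightarrow> a \<le> ys!q \<and> ys!q \<le> b \<longrightarrow> ys!q < ys!p)"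
  and h: "ismx xs i k p"
  shows "ismx ys i k p"
proof -
  have b: "i \<le> p" "p \<le> k" "k < length xs" using h by (auto simp: ismx_def)
  have all: "\<And>q. i \<le> q \<Longrightarrow> q \<le> k \<Longrightarrow> q \<noteq> p \<Longrightarrow> xs!q < xs!p" using h by (auto simp: ismx_def)
  have "ys!q < ys!p" if q: "i \<le> q" "q \<le> k" "q \<noteq> p" for q
  proof (cases "a \<le> xs!p \<and> xs!p \<le> b")
    case True
    then have ip: "a \<le> ys!p \<and> ys!p \<le> b" using inn[of p] b by linarith
    have "\<forall>q. i \<le> q \<longrightarrow> q \<le> k \<longrightarrow> q \<noteq> p \<longrightarrow> a \<le> ys!q \<and> ys!q \<le> b \<longrightarrow> ys!q < ys!p"
      using blk[OF b(3) b(1) b(2) True] all by simp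
    then show ?thesis
    proof (cases "a \<le> ys!q \<and> ys!q \<le> b")
      case True
      then show ?thesis using \<open>\<forall>q. _\<close> q by blast
    next
      case False
      have ql: "q < length xs" using q b by linarith
      then have "\<not> (a \<le> xs!q \<and> xs!q \<le> b)" using inn[OF ql] False by blast
      then have "xs!q = ys!q" using out[OF ql] by blast
      moreover have "xs!q < xs!p" using all q by blast
      ultimately show ?thesis using True ip \<open>\<not> (a \<le> xs!q \<and> xs!q \<le> b)\<close> by linarith
    qed
  next
    case False
    then have ep: "xs!p = ys!p" using out[of p] b by linarith
    have lt: "xs!q < xs!p" using all q by blast
    show ?thesis
    proof (cases "a \<le> xs!q \<and> xs!q \<le> b")
      case True
      then have "a \<le> ys!q \<and> ys!q \<le> b" using inn[of q] q b by linarith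
      moreover have "b < xs!p" using True lt False by linarith
      ultimately show ?thesis using ep by linarith
    next
      case f2: False
      then show ?thesis using out[of q] q b lt ep by linarith
    qed
  qed
  then show ?thesis using b len by (auto simp: ismx_def)
qed

lemma block_Eqv:
  assumes len: "length xs = length ys"
  and inn: "\<And>i. i < length xs \<Longrightarrow> (a \<le> xs!i \<and> xs!i \<le> b) = (a \<le> ys!i \<and> ys!i \<le> b)"
  and out: "\<And>i. i < length xs \<Longrightarrow> \<not>(a \<le> xs!i \<and> xs!i \<le> b) \<Longrightarrow> xs!i = ys!i"
  and blk: "\<And>i k p. k < length xs \<Longrightarrow> i \<le> p \<Longrightarrow> p \<le> k \<Longrightarrow> a \<le> xs!p \<and> xs!p \<le> b \<Longrightarrow>
     (\<forall>q. i \<le> q \<longrightarrow> q \<le> k \<longrightarrow> q \<noteq> p \<longrightarrow> a \<le> xs!q \<and> xs!q \<le> b \<longrightarrow> xs!q < xs!p) =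
     (\<forall>q. i \<le> q \<longrightarrow> q \<le> k \<longrightarrow> q \<noteq> p \<longrightarrow> a \<le> ys!q \<and> ys!q \<le> b \<longrightarrow> ys!q < ys!p)"
  shows "Eqv xs ys"
proof -
  have "ismx xs i k p \<longleftrightarrow> ismx ys i k p" for i k p
  proof
    assume "ismx xs i k p" show "ismx ys i k p" using len inn out blk \<open>ismx xs i k p\<close> by (rule block_ismx)
  next
    assume h: "ismx ys i k p"
    have inn': "(a \<le> ys!i \<and> ys!i \<le> b) = (a \<le> xs!i \<and> xs!i \<le> b)" if "i < length ys" for i
      using inn[of i] len that by simp
    have out': "ys!i = xs!i" if "i < length ys" "\<not>(a \<le> ys!i \<and> ys!i \<le> b)" for i
      using inn[of i] out[of i] len that by simp
    have blk': "(\<forall>q. i \<le> q \<longrightarrow> q \<le> k \<longrightarrow> q \<noteq> p \<longrightarrow> a \<le> ys!q \<and> ys!q \<le> b \<longrightarrow> ys!q < ys!p) =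
            (\<forall>q. i \<le> q \<longrightarrow> q \<le> k \<longrightarrow> q \<noteq> p \<longrightarrow> a \<le> xs!q \<and> xs!q \<le> b \<longrightarrow> xs!q < xs!p)"
      if a: "k < length ys" "i \<le> p" "p \<le> k" "a \<le> ys!p \<and> ys!p \<le> b" for i k p
    proof -
      have a': "a \<le> xs!p \<and> xs!p \<le> b" using inn[of p] len a by simp
      show ?thesis using blk[of k i p] a a' len by simp
    qed
    show "ismx xs i k p" using len[symmetric] inn' out' blk' h by (rule block_ismx)
  qed
  then show ?thesis using len by (simp add: Eqv_def)
qed


definition cnt :: "(nat \<Rightarrow> bool) \<Rightarrow> nat list \<Rightarrow> nat \<Rightarrow> nat" where
  "cnt P xs i = card {k. k < i \<and> P (xs ! k)}"

lemma cnt_mono: "i \<le> j \<Longrightarrow> cnt P xs i \<le> cnt P xs j"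
  unfolding cnt_def by (rule card_mono) auto

lemma cnt_less: "P (xs ! q) \<Longrightarrow> q < i \<Longrightarrow> cnt P xs q < cnt P xs i"
  unfolding cnt_def
proof (rule psubset_card_mono)
  assume "P (xs ! q)" "q < i"
  then show "{k. k < q \<and> P (xs ! k)} \<subset> {k. k < i \<and> P (xs ! k)}" by auto
qed auto

lemma cnt_len: "cnt P xs (length xs) = length (filter P xs)"
  unfolding cnt_def by (simp add: length_filter_conv_card)

lemma cnt_nth:
  assumes "q < length xs" "P (xs ! q)"
  shows "filter P xs ! cnt P xs q = xs ! q"
proof -
  have e: "xs = take q xs @ xs ! q # drop (Suc q) xs" using assms by (simp add: id_take_nth_drop)
  have "length (filter P (take q xs)) = cnt P xs q"
    unfolding cnt_def length_filter_conv_card using assms(1)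
    by (intro arg_cong[where f=card]) auto
  moreover have "filter P xs = filter P (take q xs) @ xs ! q # filter P (drop (Suc q) xs)"
    using assms by (subst e) simp
  ultimately show ?thesis by (simp add: nth_append)
qed

lemma cnt_bound: "q < length xs \<Longrightarrow> P (xs ! q) \<Longrightarrow> cnt P xs q < length (filter P xs)"
  using cnt_less[of P xs q "length xs"] cnt_len by simp

lemma cnt_surj:
  assumes "j < length (filter P xs)"
  shows "\<exists>q < length xs. P (xs ! q) \<and> cnt P xs q = j"
proof -
  define Q where "Q = {q. q < length xs \<and> P (xs ! q)}"
  have inj: "inj_on (cnt P xs) Q"
  proof (rule inj_onI)
    fix x y assume "x \<in> Q" "y \<in> Q" "cnt P xs x = cnt P xs y"
    then have px: "P (xs ! x)" "P (xs ! y)" unfolding Q_def by auto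
    show "x = y"
    proof (rule ccontr)
      assume "x \<noteq> y"
      then consider "x < y" | "y < x" by linarith
      then show False
      proof cases
        case 1 then show False using cnt_less[of P xs x y] px \<open>cnt P xs x = cnt P xs y\<close> by simp
      next
        case 2 then show False using cnt_less[of P xs y x] px \<open>cnt P xs x = cnt P xs y\<close> by simp
      qed
    qed
  qed
  have sub: "cnt P xs ` Q \<subseteq> {..<length (filter P xs)}"
    unfolding Q_def using cnt_bound by auto
  have "card Q = length (filter P xs)" unfolding Q_def by (simp add: length_filter_conv_card)
  then have "card (cnt P xs ` Q) = card {..<length (filter P xs)}" using inj by (simp add: card_image)
  then have "cnt P xs ` Q = {..<length (filter P xs)}" using sub by (simp add: card_subset_eq)
  then have "j \<in> cnt P xs ` Q" using assms by simp
  then obtain q where "q \<in> Q" "j = cnt P xs q" by blast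
  then show ?thesis unfolding Q_def by auto
qed

lemma cnt_block:
  assumes len: "length zs = length (filter P xs)" and k: "k < length xs" and ip: "i \<le> p" "p \<le> k"
    and Pp: "P (xs ! p)"
  shows "(\<forall>q. i \<le> q \<longrightarrow> q \<le> k \<longrightarrow> q \<noteq> p \<longrightarrow> P (xs ! q) \<longrightarrow> zs ! cnt P xs q < zs ! cnt P xs p)
     \<longleftrightarrow> ismx zs (cnt P xs i) (cnt P xs (Suc k) - 1) (cnt P xs p)"
proof
  assume h: "\<forall>q. i \<le> q \<longrightarrow> q \<le> k \<longrightarrow> q \<noteq> p \<longrightarrow> P (xs ! q) \<longrightarrow> zs ! cnt P xs q < zs ! cnt P xs p"
  have c1: "cnt P xs i \<le> cnt P xs p" using ip cnt_mono by blast
  have c2: "cnt P xs p < cnt P xs (Suc k)" using ip Pp cnt_less[of P xs p "Suc k"] by simp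
  have c3: "cnt P xs (Suc k) \<le> length zs" using k cnt_mono[of "Suc k" "length xs" P xs] cnt_len len by simp
  show "ismx zs (cnt P xs i) (cnt P xs (Suc k) - 1) (cnt P xs p)"
    unfolding ismx_def
  proof (intro conjI allI impI)
    fix j assume j: "cnt P xs i \<le> j" "j \<le> cnt P xs (Suc k) - 1" "j \<noteq> cnt P xs p"
    then have "j < length (filter P xs)" using c2 c3 len by linarith
    then obtain q where q: "q < length xs" "P (xs ! q)" "cnt P xs q = j" using cnt_surj by blast
    have "i \<le> q"
    proof (rule ccontr)
      assume "\<not> i \<le> q" then have "cnt P xs q < cnt P xs i" using q cnt_less[of P xs q i] by simp
      then show False using j q by simp
    qed
    moreover have "q \<le> k"
    proof (rule ccontr)
      assume "\<not> q \<le> k" then have "cnt P xs (Suc k) \<le> cnt P xs q" using cnt_mono by simp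
      then show False using j q c2 by linarith
    qed
    moreover have "q \<noteq> p" using q j by auto
    ultimately show "zs ! j < zs ! cnt P xs p" using h q by blast
  qed (use c1 c2 c3 in linarith)+
next
  assume h: "ismx zs (cnt P xs i) (cnt P xs (Suc k) - 1) (cnt P xs p)"
  show "\<forall>q. i \<le> q \<longrightarrow> q \<le> k \<longrightarrow> q \<noteq> p \<longrightarrow> P (xs ! q) \<longrightarrow> zs ! cnt P xs q < zs ! cnt P xs p"
  proof (intro allI impI)
    fix q assume q: "i \<le> q" "q \<le> k" "q \<noteq> p" "P (xs ! q)"
    have hh: "\<forall>j. cnt P xs i \<le> j \<longrightarrow> j \<le> cnt P xs (Suc k) - 1 \<longrightarrow> j \<noteq> cnt P xs p \<longrightarrow> zs ! j < zs ! cnt P xs p"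
      using h unfolding ismx_def by blast
    have "cnt P xs i \<le> cnt P xs q" using q cnt_mono by blast
    moreover have "cnt P xs q < cnt P xs (Suc k)" using q cnt_less[of P xs q "Suc k"] by simp
    then have "cnt P xs q \<le> cnt P xs (Suc k) - 1" by linarith
    moreover have "cnt P xs q \<noteq> cnt P xs p"
    proof
      assume eq: "cnt P xs q = cnt P xs p"
      consider "q < p" | "p < q" using q by linarith
      then show False
      proof cases
        case 1 then show False using cnt_less[of P xs q p] q eq by simp
      next
        case 2 then show False using cnt_less[of P xs p q] Pp eq by simp
      qed
    qed
    ultimately show "zs ! cnt P xs q < zs ! cnt P xs p" using hh by blast
  qed
qed


theorem lemma6p2:
  fixes n a b :: nat and \<tau> :: "nat list"
  assumes "n \<ge> 1" and "\<tau> \<in> perms n" and "1 \<le> a" and "a < b" and "b \<le> n"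
  shows "lam \<tau> = lam (bar_int \<tau> a b)"
proof -
  define P where "P = (\<lambda>x::nat. a \<le> x \<and> x \<le> b)"
  define w where "w = filter P \<tau>"
  define \<sigma> where "\<sigma> = st w"
  define ob where "ob = pbar \<sigma>"
  define m where "m = length w"
  define \<tau>' where "\<tau>' = bar_int \<tau> a b"
  have lt: "length \<tau> = n" using assms(2) perms_length by auto
  have dt: "distinct \<tau>" and stt: "set \<tau> = {1..n}" using assms(2) by (auto simp: perms_def)
  have dw: "distinct w" unfolding w_def using dt by simp
  have sp: "\<sigma> \<in> perms m" unfolding \<sigma>_def m_def using st_perms[OF dw] .
  have op: "ob \<in> perms m" and lo: "lam ob = lam \<sigma>"
    using gam_perm[of "lam \<sigma>"] lam_size[OF sp] by (auto simp: ob_def pbar_def)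
  have E: "Eqv \<sigma> ob" using lam_Eqv[OF sp op lo[symmetric]] .
  have lsig: "length \<sigma> = m" "length ob = m" using sp op perms_length by auto
  have mb: "m \<le> b + 1 - a"
  proof -
    have "set w \<subseteq> {a..b}" unfolding w_def P_def by auto
    then have "card (set w) \<le> card {a..b}" by (metis card_mono finite_atLeastAtMost)
    then show ?thesis using distinct_card[OF dw] by (simp add: m_def)
  qed
  have obr: "1 \<le> ob ! j \<and> ob ! j \<le> m" if "j < m" for j
  proof -
    have "ob ! j \<in> set ob" using that lsig by simp
    then show ?thesis using op by (simp add: perms_def)
  qed
  have cb: "cnt P \<tau> i < m" if "i < n" "P (\<tau> ! i)" for i
    using cnt_bound[of i \<tau> P] that lt by (simp add: m_def w_def)
  have cw: "w ! cnt P \<tau> i = \<tau> ! i" if "i < n" "P (\<tau> ! i)" for i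
    using cnt_nth[of i \<tau> P] that lt by (simp add: w_def)
  have tl: "length \<tau>' = n" by (simp add: \<tau>'_def bar_int_def lt)
  have tn: "\<tau>' ! i = (if P (\<tau> ! i) then a - 1 + ob ! cnt P \<tau> i else \<tau> ! i)" if "i < n" for i
    using that lt by (simp add: \<tau>'_def bar_int_def Let_def P_def cnt_def ob_def \<sigma>_def w_def)
  have inn: "P (\<tau>' ! i) = P (\<tau> ! i)" if "i < n" for i
  proof (cases "P (\<tau> ! i)")
    case True
    then have "1 \<le> ob ! cnt P \<tau> i \<and> ob ! cnt P \<tau> i \<le> m" using obr cb that by blast
    then show ?thesis using True tn[OF that] mb assms(3,4) by (simp add: P_def, arith)
  next
    case False then show ?thesis using tn[OF that] by simp
  qed
  have out: "\<tau>' ! i = \<tau> ! i" if "i < n" "\<not> P (\<tau> ! i)" for i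
    using tn that by simp
  have blkP: "(\<forall>q. i \<le> q \<longrightarrow> q \<le> k \<longrightarrow> q \<noteq> p \<longrightarrow> P (\<tau>!q) \<longrightarrow> \<tau>!q < \<tau>!p) =
     (\<forall>q. i \<le> q \<longrightarrow> q \<le> k \<longrightarrow> q \<noteq> p \<longrightarrow> P (\<tau>'!q) \<longrightarrow> \<tau>'!q < \<tau>'!p)"
    if kp: "k < n" "i \<le> p" "p \<le> k" "P (\<tau>!p)" for i k p
  proof -
    have pn: "p < n" using kp by linarith
    have s1: "(\<tau>!q < \<tau>!p) = (\<sigma> ! cnt P \<tau> q < \<sigma> ! cnt P \<tau> p)" if "q \<le> k" "P (\<tau>!q)" for q
    proof -
      have qn: "q < n" using that kp by linarith
      have "(\<sigma> ! cnt P \<tau> q < \<sigma> ! cnt P \<tau> p) = (w ! cnt P \<tau> q < w ! cnt P \<tau> p)"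
        unfolding \<sigma>_def using st_nth_less cb[OF qn that(2)] cb[OF pn kp(4)] m_def by blast
      then show ?thesis using cw[OF qn that(2)] cw[OF pn kp(4)] by simp
    qed
    have s2: "(\<tau>'!q < \<tau>'!p) = (ob ! cnt P \<tau> q < ob ! cnt P \<tau> p)" if "q \<le> k" "P (\<tau>!q)" for q
    proof -
      have qn: "q < n" using that kp by linarith
      show ?thesis using tn[OF qn] tn[OF pn] that kp(4) by simp
    qed
    have s3: "P (\<tau>'!q) = P (\<tau>!q)" if "q \<le> k" for q using inn that kp by simp
    have lw: "length \<sigma> = length (filter P \<tau>)" "length ob = length (filter P \<tau>)"
      using lsig by (simp_all add: m_def w_def)
    have "(\<forall>q. i \<le> q \<longrightarrow> q \<le> k \<longrightarrow> q \<noteq> p \<longrightarrow> P (\<tau>!q) \<longrightarrow> \<tau>!q < \<tau>!p) =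
          (\<forall>q. i \<le> q \<longrightarrow> q \<le> k \<longrightarrow> q \<noteq> p \<longrightarrow> P (\<tau>!q) \<longrightarrow> \<sigma> ! cnt P \<tau> q < \<sigma> ! cnt P \<tau> p)"
      using s1 by blast
    also have "\<dots> = ismx \<sigma> (cnt P \<tau> i) (cnt P \<tau> (Suc k) - 1) (cnt P \<tau> p)"
      using cnt_block[OF lw(1), of k i p] kp lt by simp
    also have "\<dots> = ismx ob (cnt P \<tau> i) (cnt P \<tau> (Suc k) - 1) (cnt P \<tau> p)"
      using E by (simp add: Eqv_def)
    also have "\<dots> = (\<forall>q. i \<le> q \<longrightarrow> q \<le> k \<longrightarrow> q \<noteq> p \<longrightarrow> P (\<tau>!q) \<longrightarrow> ob ! cnt P \<tau> q < ob ! cnt P \<tau> p)"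
      using cnt_block[OF lw(2), of k i p] kp lt by simp
    also have "\<dots> = (\<forall>q. i \<le> q \<longrightarrow> q \<le> k \<longrightarrow> q \<noteq> p \<longrightarrow> P (\<tau>'!q) \<longrightarrow> \<tau>'!q < \<tau>'!p)"
      using s2 s3 by blast
    finally show ?thesis .
  qed
  have EE: "Eqv \<tau> \<tau>'"
  proof (rule block_Eqv[where a=a and b=b])
    show "length \<tau> = length \<tau>'" using lt tl by simp
  next
    fix i assume "i < length \<tau>" then show "(a \<le> \<tau>!i \<and> \<tau>!i \<le> b) = (a \<le> \<tau>'!i \<and> \<tau>'!i \<le> b)"
      using inn[of i] lt by (simp add: P_def)
  next
    fix i assume "i < length \<tau>" "\<not>(a \<le> \<tau>!i \<and> \<tau>!i \<le> b)" then show "\<tau>!i = \<tau>'!i"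
      using out[of i] lt by (simp add: P_def)
  next
    fix i k p assume "k < length \<tau>" "i \<le> p" "p \<le> k" "a \<le> \<tau>!p \<and> \<tau>!p \<le> b"
    then show "(\<forall>q. i \<le> q \<longrightarrow> q \<le> k \<longrightarrow> q \<noteq> p \<longrightarrow> a \<le> \<tau>!q \<and> \<tau>!q \<le> b \<longrightarrow> \<tau>!q < \<tau>!p) =
     (\<forall>q. i \<le> q \<longrightarrow> q \<le> k \<longrightarrow> q \<noteq> p \<longrightarrow> a \<le> \<tau>'!q \<and> \<tau>'!q \<le> b \<longrightarrow> \<tau>'!q < \<tau>'!p)"
      using blkP[of k i p] lt by (simp add: P_def)
  qed
  have tp: "\<tau>' \<in> perms n"
  proof -
    have vals: "\<tau>' ! i \<in> {1..n}" if "i < n" for i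
    proof (cases "P (\<tau> ! i)")
      case True
      then have "P (\<tau>' ! i)" using inn that by simp
      then show ?thesis using assms(3,5) by (auto simp: P_def)
    next
      case False
      then have "\<tau>' ! i = \<tau> ! i" using out that by simp
      then show ?thesis using stt lt that nth_mem by metis
    qed
    have dist: "distinct \<tau>'"
      unfolding distinct_conv_nth
    proof (intro allI impI)
      fix i j assume ij: "i < length \<tau>'" "j < length \<tau>'" "i \<noteq> j"
      then have ijn: "i < n" "j < n" using tl by auto
      show "\<tau>' ! i \<noteq> \<tau>' ! j"
      proof (cases "P (\<tau> ! i)"; cases "P (\<tau> ! j)")
        assume pi: "P (\<tau> ! i)" and pj: "P (\<tau> ! j)"
        have "cnt P \<tau> i \<noteq> cnt P \<tau> j"
        proof
          assume eq: "cnt P \<tau> i = cnt P \<tau> j"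
          consider "i < j" | "j < i" using ij by linarith
          then show False
          proof cases
            case 1 then show False using cnt_less[of P \<tau> i j] pi eq by simp
          next
            case 2 then show False using cnt_less[of P \<tau> j i] pj eq by simp
          qed
        qed
        moreover have "cnt P \<tau> i < m" "cnt P \<tau> j < m" using cb ijn pi pj by auto
        moreover have "distinct ob" using op by (simp add: perms_def)
        ultimately have "ob ! cnt P \<tau> i \<noteq> ob ! cnt P \<tau> j" using lsig by (simp add: nth_eq_iff_index_eq)
        then show ?thesis using tn[OF ijn(1)] tn[OF ijn(2)] pi pj by simp
      next
        assume pi: "P (\<tau> ! i)" and pj: "\<not> P (\<tau> ! j)"
        then show ?thesis using inn[OF ijn(1)] inn[OF ijn(2)] by auto
      next
        assume pi: "\<not> P (\<tau> ! i)" and pj: "P (\<tau> ! j)"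
        then show ?thesis using inn[OF ijn(1)] inn[OF ijn(2)] by auto
      next
        assume pi: "\<not> P (\<tau> ! i)" and pj: "\<not> P (\<tau> ! j)"
        then have "\<tau> ! i \<noteq> \<tau> ! j" using dt ijn lt ij(3) by (simp add: nth_eq_iff_index_eq)
        then show ?thesis using out[OF ijn(1) pi] out[OF ijn(2) pj] by simp
      qed
    qed
    have sub: "set \<tau>' \<subseteq> {1..n}" using vals tl by (auto simp: in_set_conv_nth)
    have "card (set \<tau>') = n" using dist distinct_card tl by metis
    then have "set \<tau>' = {1..n}" using sub by (simp add: card_subset_eq)
    then show ?thesis using dist by (simp add: perms_def)
  qed
  show ?thesis using Eqv_lam[OF assms(2) tp EE] by (simp add: \<tau>'_def)
qed

end
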